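(* With the notation in the context, the following identity of linear endomorphisms of $\mathbb C^{\mathcal L(\Omega)}$ holds: $(q^2-1)\big(L_2(x_0)R_2(x_0)-R_2(x_0)L_2(x_0)\big)=(q^2-1)D_3(x_0)+D_4(x_0)-q^DD_1(x_0)^{-1}D_2(x_0)^{-1}$.
   Context: $\Omega$ is a $D$-dimensional vector space over a finite field $\mathbb F$ and $q=\sqrt{|\mathbb F|}$. $\mathcal L(\Omega)$ is the set of subspaces of $\Omega$ and $\mathbb C^{\mathcal L(\Omega)}$ the complex vector space with basis $\mathcal L(\Omega)$; $x'\subset\mathrel{\cdot} x$ means $x'\subseteq x$ with $\dim x'=\dim x-1$; $|y|$ denotes the cardinality of a subspace $y$ (so $|y|=q^{2\dim y}$). Fix subspaces $x_0,x_1$ with $\Omega=x_0\oplus x_1$; for $u\in\Omega$ write $u=u_0+u_1$ with $u_0\in x_0$, $u_1\in x_1$. For $x\in\mathcal L(\Omega)$ let $\tau(x):(x+x_0)/x_0\to x_0/(x\cap x_0)$ be the linear map $u+x_0\mapsto u_0+(x\cap x_0)$ ($u\in x$). Linear maps on $\mathbb C^{\mathcal L(\Omega)}$ are defined on the basis by: $L_1(x_0)x=\sum x'$ over $x'\subset\mathrel{\cdot} x$ with $x'\cap x_0=x\cap x_0$; $L_2(x_0)x=\sum x'$ over $x'\subset\mathrel{\cdot} x$ with $x'+x_0=x+x_0$; $R_1(x_0)x=\sum x'$ over $x\subset\mathrel{\cdot} x'$ with $x'\cap x_0=x\cap x_0$; $R_2(x_0)x=\sum x'$ over $x\subset\mathrel{\cdot}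 x'$ with $x'+x_0=x+x_0$; $D_1(x_0)x=q^{\dim(\Omega/x_0)-2\dim((x+x_0)/x_0)}x$; $D_2(x_0)x=q^{\dim x_0-2\dim(x\cap x_0)}x$; $D_3(x_0)x=\sum x'$ over $x'\in\mathcal L(\Omega)$ with $x'+x_0=x+x_0$, $x'\cap x_0=x\cap x_0$ and $\operatorname{rank}(\tau(x')-\tau(x))=1$; $D_4(x_0)x=\big(\frac{|x|+|x_0|}{|x\cap x_0|}-1\big)x$. *)

theory Defs
  imports Complex_Main
begin

text \<open>Omega is the whole type 'v.  Linear endomorphisms of
  C^{L(Omega)} are represented by their matrices with respect to the basis L(Omega):
  M y x is the coefficient of the basis vector y in M(x).\<close>

type_synonym 'v op = "'v set \<Rightarrow> 'v set \<Rightarrow> complex"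

definition subspaces :: "('f::field \<Rightarrow> 'v::ab_group_add \<Rightarrow> 'v) \<Rightarrow> 'v set set" where
  "subspaces sc = {x. module.subspace sc x}"

abbreviation vdim :: "('f::field \<Rightarrow> 'v::ab_group_add \<Rightarrow> 'v) \<Rightarrow> 'v set \<Rightarrow> nat" where
  "vdim sc \<equiv> vector_space.dim sc"

definition Dim :: "('f::field \<Rightarrow> 'v::ab_group_add \<Rightarrow> 'v) \<Rightarrow> nat" where
  "Dim sc = vdim sc (UNIV :: 'v set)"

definition qq :: "('f::{field,finite} \<Rightarrow> 'v::ab_group_add \<Rightarrow> 'v) \<Rightarrow> real" where
  "qq sc = sqrt (real (card (UNIV :: 'f set)))"

definition ssum :: "'v::ab_group_add set \<Rightarrow> 'v set \<Rightarrow> 'v set" where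
  "ssum x y = {a + b | a b. a \<in> x \<and> b \<in> y}"

definition covby :: "('f::field \<Rightarrow> 'v::ab_group_add \<Rightarrow> 'v) \<Rightarrow> 'v set \<Rightarrow> 'v set \<Rightarrow> bool" where
  "covby sc x' x \<longleftrightarrow> x' \<in> subspaces sc \<and> x \<in> subspaces sc \<and> x' \<subseteq> x \<and> vdim sc x' + 1 = vdim sc x"

definition ocomp :: "('f::field \<Rightarrow> 'v::ab_group_add \<Rightarrow> 'v) \<Rightarrow> 'v op \<Rightarrow> 'v op \<Rightarrow> 'v op" where
  "ocomp sc A B = (\<lambda>y x. \<Sum>z\<in>subspaces sc. A y z * B z x)"

definition oid :: "'v op" where
  "oid = (\<lambda>y x. if y = x then 1 else 0)"

definition oinv :: "('f::field \<Rightarrow> 'v::ab_group_add \<Rightarrow> 'v) \<Rightarrow> 'v op \<Rightarrow> 'v op" where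
  "oinv sc M = (THE N. (\<forall>y x. (y \<notin> subspaces sc \<or> x \<notin> subspaces sc) \<longrightarrow> N y x = 0) \<and>
      (\<forall>y\<in>subspaces sc. \<forall>x\<in>subspaces sc. ocomp sc N M y x = oid y x \<and> ocomp sc M N y x = oid y x))"

definition proj0 :: "'v::ab_group_add set \<Rightarrow> 'v set \<Rightarrow> 'v \<Rightarrow> 'v" where
  "proj0 x0 x1 u = (THE a. a \<in> x0 \<and> u - a \<in> x1)"

definition coset :: "'v::ab_group_add set \<Rightarrow> 'v \<Rightarrow> 'v set" where
  "coset W u = {u + w | w. w \<in> W}"

text \<open>tau(x) : (x + x0)/x0 \<rightarrow> x0/(x \<inter> x0), u + x0 \<mapsto> u0 + (x \<inter> x0) for u \<in> x;
  elements of quotients are represented as cosets\<close>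
definition tau :: "'v::ab_group_add set \<Rightarrow> 'v set \<Rightarrow> 'v set \<Rightarrow> 'v set \<Rightarrow> 'v set" where
  "tau x0 x1 x C = (let u = (SOME u. u \<in> x \<and> coset x0 u = C)
                    in coset (x \<inter> x0) (proj0 x0 x1 u))"

definition qdom :: "'v::ab_group_add set \<Rightarrow> 'v set \<Rightarrow> 'v set set" where
  "qdom x0 x = {coset x0 u | u. u \<in> x}"

definition tau_diff :: "'v::ab_group_add set \<Rightarrow> 'v set \<Rightarrow> 'v set \<Rightarrow> 'v set \<Rightarrow> 'v set \<Rightarrow> 'v set" where
  "tau_diff x0 x1 x' x C = {a - b | a b. a \<in> tau x0 x1 x' C \<and> b \<in> tau x0 x1 x C}"

text \<open>rank of tau(x') - tau(x): dimension of its image, a subspace of x0/(x \<inter> x0);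
  computed as dim U - dim (x \<inter> x0) where U \<subseteq> x0 is the preimage of the image
  under the quotient map x0 \<rightarrow> x0/(x \<inter> x0) (i.e. the union of the image cosets)\<close>
definition tau_rank :: "('f::field \<Rightarrow> 'v::ab_group_add \<Rightarrow> 'v) \<Rightarrow> 'v set \<Rightarrow> 'v set \<Rightarrow> 'v set \<Rightarrow> 'v set \<Rightarrow> nat" where
  "tau_rank sc x0 x1 x' x =
     vdim sc (\<Union>C\<in>qdom x0 x. tau_diff x0 x1 x' x C) - vdim sc (x \<inter> x0)"

definition opL1 :: "('f::field \<Rightarrow> 'v::ab_group_add \<Rightarrow> 'v) \<Rightarrow> 'v set \<Rightarrow> 'v op" where
  "opL1 sc x0 = (\<lambda>y x. if covby sc y x \<and> y \<inter> x0 = x \<inter> x0 then 1 else 0)"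

definition opL2 :: "('f::field \<Rightarrow> 'v::ab_group_add \<Rightarrow> 'v) \<Rightarrow> 'v set \<Rightarrow> 'v op" where
  "opL2 sc x0 = (\<lambda>y x. if covby sc y x \<and> ssum y x0 = ssum x x0 then 1 else 0)"

definition opR1 :: "('f::field \<Rightarrow> 'v::ab_group_add \<Rightarrow> 'v) \<Rightarrow> 'v set \<Rightarrow> 'v op" where
  "opR1 sc x0 = (\<lambda>y x. if covby sc x y \<and> y \<inter> x0 = x \<inter> x0 then 1 else 0)"

definition opR2 :: "('f::field \<Rightarrow> 'v::ab_group_add \<Rightarrow> 'v) \<Rightarrow> 'v set \<Rightarrow> 'v op" where
  "opR2 sc x0 = (\<lambda>y x. if covby sc x y \<and> ssum y x0 = ssum x x0 then 1 else 0)"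

definition opD1 :: "('f::{field,finite} \<Rightarrow> 'v::ab_group_add \<Rightarrow> 'v) \<Rightarrow> 'v set \<Rightarrow> 'v op" where
  "opD1 sc x0 = (\<lambda>y x. if y = x \<and> x \<in> subspaces sc then
      complex_of_real (qq sc powr real_of_int
        ((int (Dim sc) - int (vdim sc x0)) - 2 * (int (vdim sc (ssum x x0)) - int (vdim sc x0))))
      else 0)"

definition opD2 :: "('f::{field,finite} \<Rightarrow> 'v::ab_group_add \<Rightarrow> 'v) \<Rightarrow> 'v set \<Rightarrow> 'v op" where
  "opD2 sc x0 = (\<lambda>y x. if y = x \<and> x \<in> subspaces sc then
      complex_of_real (qq sc powr real_of_int (int (vdim sc x0) - 2 * int (vdim sc (x \<inter> x0))))
      else 0)"

definition opD3 :: "('f::field \<Rightarrow> 'v::ab_group_add \<Rightarrow> 'v) \<Rightarrow> 'v set \<Rightarrow> 'v set \<Rightarrow> 'v op" where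
  "opD3 sc x0 x1 = (\<lambda>y x. if y \<in> subspaces sc \<and> x \<in> subspaces sc \<and> ssum y x0 = ssum x x0 \<and>
      y \<inter> x0 = x \<inter> x0 \<and> tau_rank sc x0 x1 y x = 1 then 1 else 0)"

definition opD4 :: "('f::field \<Rightarrow> 'v::ab_group_add \<Rightarrow> 'v) \<Rightarrow> 'v set \<Rightarrow> 'v op" where
  "opD4 sc x0 = (\<lambda>y x. if y = x \<and> x \<in> subspaces sc then
      (of_nat (card x) + of_nat (card x0)) / of_nat (card (x \<inter> x0)) - 1 else 0)"

end

theory Submission
  imports Defs
begin

locale fvs = vector_space sc for sc :: "'f::{field,finite} \<Rightarrow> 'v::ab_group_add \<Rightarrow> 'v" +
  assumes finV: "finite (UNIV :: 'v set)"
begin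

lemma fin_any[simp,intro]: "finite (X :: 'v set)"
  by (rule finite_subset[OF subset_UNIV finV])

lemma fin_sets[simp,intro]: "finite (X :: 'v set set)"
proof -
  have "finite (Pow (UNIV :: 'v set))" using finV by (simp only: finite_Pow_iff)
  then show ?thesis by (rule finite_subset[rotated]) auto
qed

sublocale fd: finite_dimensional_vector_space sc "extend_basis {}"
  by unfold_locales (auto simp: independent_extend_basis[OF independent_empty] span_extend_basis[OF independent_empty])

definition Q :: nat where "Q = card (UNIV :: 'f set)"

lemma Q_ge2: "Q \<ge> 2"
proof -
  have "{0::'f, 1} \<subseteq> UNIV" by simp
  then have "card {0::'f,1} \<le> Q" unfolding Q_def by (rule card_mono[OF finite])
  then show ?thesis by simp
qed

lemma card_span_indep: "independent B \<Longrightarrow> card (span B) = Q ^ card B"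
proof -
  assume ind: "independent B"
  have "finite B" by simp
  then show ?thesis using ind
  proof (induction B rule: finite_induct)
    case empty then show ?case by simp
  next
    case (insert b B)
    have indB: "independent B" using insert.prems independent_mono by blast
    have bnot: "b \<notin> span B" using insert.prems insert.hyps(2)
      by (simp add: independent_insert)
    have "span (insert b B) = (\<lambda>(c,u). sc c b + u) ` (UNIV \<times> span B)"
    proof (rule set_eqI)
      fix v show "v \<in> span (insert b B) \<longleftrightarrow> v \<in> (\<lambda>(c,u). sc c b + u) ` (UNIV \<times> span B)"
      proof
        assume "v \<in> span (insert b B)"
        then obtain k where k: "v - sc k b \<in> span B" unfolding span_insert by blast
        have "v = (\<lambda>(c,u). sc c b + u) (k, v - sc k b)" by simp
        then show "v \<in> (\<lambda>(c,u). sc c b + u) ` (UNIV \<times> span B)" using k by blast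
      next
        assume "v \<in> (\<lambda>(c,u). sc c b + u) ` (UNIV \<times> span B)"
        then obtain p where p: "p \<in> UNIV \<times> span B" "v = (\<lambda>(c,u). sc c b + u) p" by (rule imageE)
        obtain c u where "p = (c, u)" by (cases p)
        then have cu: "u \<in> span B" "v = sc c b + u" using p by auto
        then have "v - sc c b \<in> span B" by simp
        then show "v \<in> span (insert b B)" unfolding span_insert by blast
      qed
    qed
    moreover have "inj_on (\<lambda>(c,u). sc c b + u) (UNIV \<times> span B)"
    proof (rule inj_onI, clarsimp)
      fix c u c' u' assume u: "u \<in> span B" "u' \<in> span B" and e: "sc c b + u = sc c' b + u'"
      have "sc (c - c') b = u' - u" using e
        by (simp add: scale_left_diff_distrib algebra_simps)
      then have "sc (c - c') b \<in> span B" using u by (simp add: span_diff)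
      have "c = c'"
      proof (rule ccontr)
        assume ne: "c \<noteq> c'"
        have "sc (inverse (c - c')) (sc (c - c') b) \<in> span B"
          using \<open>sc (c - c') b \<in> span B\<close> by (rule span_scale)
        then have "b \<in> span B" using ne by simp
        then show False using bnot by simp
      qed
      then show "c = c' \<and> u = u'" using e by simp
    qed
    ultimately have "card (span (insert b B)) = card ((UNIV :: 'f set) \<times> span B)"
      by (simp only: card_image)
    also have "\<dots> = Q * Q ^ card B" using insert indB by (simp add: card_cartesian_product Q_def)
    finally show ?case using insert.hyps by simp
  qed
qed

lemma card_subspace: "subspace x \<Longrightarrow> card x = Q ^ dim x"
proof -
  assume sx: "subspace x"
  obtain B where B: "B \<subseteq> x" "independent B" "x \<subseteq> span B" "card B = dim x"
    using basis_exists by blast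
  have "span B = x" using B sx span_subspace by blast
  then show ?thesis using card_span_indep[OF B(2)] B(4) by simp
qed

lemma ssum_sub: "subspace x \<Longrightarrow> subspace y \<Longrightarrow> subspace (ssum x y)"
  unfolding ssum_def by (rule subspace_sums)

lemma grass: "subspace x \<Longrightarrow> subspace y \<Longrightarrow> dim (ssum x y) + dim (x \<inter> y) = dim x + dim y"
  unfolding ssum_def by (rule fd.dim_sums_Int)

lemma ssum_ge1: "subspace y \<Longrightarrow> x \<subseteq> ssum x y"
proof
  fix u assume "subspace y" "u \<in> x"
  then have "0 \<in> y" "u = u + 0" by (simp_all add: subspace_0)
  then show "u \<in> ssum x y" unfolding ssum_def using \<open>u \<in> x\<close> by blast
qed

lemma ssum_ge2: "subspace x \<Longrightarrow> y \<subseteq> ssum x y"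
proof
  fix u assume "subspace x" "u \<in> y"
  then have "0 \<in> x" "u = 0 + u" by (simp_all add: subspace_0)
  then show "u \<in> ssum x y" unfolding ssum_def using \<open>u \<in> y\<close> by blast
qed

lemma ssum_least: "x \<subseteq> z \<Longrightarrow> y \<subseteq> z \<Longrightarrow> subspace z \<Longrightarrow> ssum x y \<subseteq> z"
proof
  fix u assume a: "x \<subseteq> z" "y \<subseteq> z" "subspace z" "u \<in> ssum x y"
  then obtain p r where "u = p + r" "p \<in> x" "r \<in> y" unfolding ssum_def by blast
  then show "u \<in> z" using a subspace_add by blast
qed

lemma ssum_comm: "ssum x y = ssum y (x::'v set)"
proof -
  have *: "ssum x y \<subseteq> ssum y x" for x y :: "'v set"
  proof
    fix u assume "u \<in> ssum x y"
    then obtain a b where ab: "u = a + b" "a \<in> x" "b \<in> y" unfolding ssum_def by blast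
    then have "u = b + a" by (simp add: add.commute)
    then show "u \<in> ssum y x" unfolding ssum_def using ab by blast
  qed
  show ?thesis using *[of x y] *[of y x] by blast
qed

lemma sub_eq_dim: "subspace x \<Longrightarrow> subspace y \<Longrightarrow> x \<subseteq> y \<Longrightarrow> dim y \<le> dim x \<Longrightarrow> x = y"
  by (rule fd.subspace_dim_equal)

lemma dim_mono': "x \<subseteq> y \<Longrightarrow> dim x \<le> dim y"
  by (rule fd.dim_subset)

lemma dim_less: "subspace x \<Longrightarrow> subspace y \<Longrightarrow> x \<subseteq> y \<Longrightarrow> x \<noteq> y \<Longrightarrow> dim x < dim y"
proof -
  assume a: "subspace x" "subspace y" "x \<subseteq> y" "x \<noteq> y"
  have "dim x \<le> dim y" using a(3) by (rule dim_mono')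
  moreover have "\<not> dim y \<le> dim x" using sub_eq_dim[OF a(1) a(2) a(3)] a(4) by blast
  ultimately show ?thesis by simp
qed

lemma sub_Int: "subspace x \<Longrightarrow> subspace y \<Longrightarrow> subspace (x \<inter> y)"
  by (rule subspace_inter)

lemma dim_zero_sub: "subspace x \<Longrightarrow> dim x = 0 \<longleftrightarrow> x = {0}"
proof -
  assume "subspace x"
  then have "0 \<in> x" by (rule subspace_0)
  show ?thesis
  proof
    assume "dim x = 0"
    then have "x \<subseteq> {0}" by simp
    then show "x = {0}" using \<open>0 \<in> x\<close> by auto
  next
    assume "x = {0}"
    then show "dim x = 0" by simp
  qed
qed

lemma sub_zero: "subspace {0}"
  by (simp add: subspace_single_0)


lemma sub_ssum_mono: "subspace x' \<Longrightarrow> subspace y' \<Longrightarrow> x \<subseteq> x' \<Longrightarrow> y \<subseteq> y' \<Longrightarrow> ssum x y \<subseteq> ssum x' y'"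
proof
  fix u assume a: "x \<subseteq> x'" "y \<subseteq> y'" "u \<in> ssum x y"
  then obtain p r where "u = p + r" "p \<in> x" "r \<in> y" unfolding ssum_def by blast
  then show "u \<in> ssum x' y'" unfolding ssum_def using a by blast
qed

lemma up_count:
  assumes sx: "subspace x" and sS: "subspace S" and xS: "x \<subseteq> S"
  shows "(real Q - 1) * real (card {z. subspace z \<and> x \<subseteq> z \<and> z \<subseteq> S \<and> dim z = dim x + 1})
         = real Q ^ (dim S - dim x) - 1"
proof -
  define U where "U = {z. subspace z \<and> x \<subseteq> z \<and> z \<subseteq> S \<and> dim z = dim x + 1}"
  have spx: "span x = x" using sx by simp
  have dimins: "dim (span (insert v x)) = dim x + 1" if "v \<notin> x" for v
  proof -
    have nv: "v \<notin> span x" unfolding spx using that .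
    then show ?thesis by (simp add: fd.dim_insert)
  qed
  have inU: "span (insert v x) \<in> U" if v: "v \<in> S - x" for v
  proof -
    have a: "subspace (span (insert v x))" by (rule subspace_span)
    have b: "x \<subseteq> span (insert v x)" using span_superset[of "insert v x"] by blast
    have c: "span (insert v x) \<subseteq> S" using v xS sS by (intro span_minimal) auto
    have d: "dim (span (insert v x)) = dim x + 1" using v dimins by blast
    show ?thesis unfolding U_def using a b c d by blast
  qed
  have uniq: "z = span (insert v x)" if z: "z \<in> U" and v: "v \<in> z - x" for z v
  proof -
    have zz: "subspace z" "x \<subseteq> z" "dim z = dim x + 1" using z unfolding U_def by auto
    have "span (insert v x) \<subseteq> z" using zz v by (intro span_minimal) auto
    moreover have "dim z \<le> dim (span (insert v x))" using dimins v zz by simp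
    ultimately show ?thesis using sub_eq_dim[OF subspace_span zz(1)] by blast
  qed
  have Sx: "S - x = (\<Union>z\<in>U. z - x)"
  proof
    show "S - x \<subseteq> (\<Union>z\<in>U. z - x)"
    proof
      fix v assume v: "v \<in> S - x"
      then have "v \<in> span (insert v x) - x" by (auto intro: span_base)
      then show "v \<in> (\<Union>z\<in>U. z - x)" using inU[OF v] by blast
    qed
    show "(\<Union>z\<in>U. z - x) \<subseteq> S - x" unfolding U_def by auto
  qed
  have "card (S - x) = (\<Sum>z\<in>U. card (z - x))"
    unfolding Sx
  proof (rule card_UN_disjoint)
    show "\<forall>i\<in>U. \<forall>j\<in>U. i \<noteq> j \<longrightarrow> (i - x) \<inter> (j - x) = {}"
    proof (intro ballI impI)
      fix i j assume ij: "i \<in> U" "j \<in> U" "i \<noteq> j"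
      show "(i - x) \<inter> (j - x) = {}"
      proof (rule ccontr)
        assume "(i - x) \<inter> (j - x) \<noteq> {}"
        then obtain v where v: "v \<in> i - x" "v \<in> j - x" by blast
        have "i = span (insert v x)" by (rule uniq[OF ij(1) v(1)])
        moreover have "j = span (insert v x)" by (rule uniq[OF ij(2) v(2)])
        ultimately show False using ij(3) by simp
      qed
    qed
    show "finite U" by (rule fin_sets)
    show "\<forall>i\<in>U. finite (i - x)" by blast
  qed
  also have "\<dots> = (\<Sum>z\<in>U. Q ^ (dim x + 1) - Q ^ dim x)"
  proof (rule sum.cong)
    fix z assume "z \<in> U"
    then have z: "subspace z" "x \<subseteq> z" "dim z = dim x + 1" unfolding U_def by auto
    show "card (z - x) = Q ^ (dim x + 1) - Q ^ dim x"
      using card_Diff_subset[OF fin_any z(2)] card_subspace[OF sx] card_subspace[OF z(1)] z(3) by simp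
  qed (rule refl)
  finally have e1: "card (S - x) = card U * (Q ^ (dim x + 1) - Q ^ dim x)" by simp
  have e2: "card (S - x) = Q ^ dim S - Q ^ dim x"
    using card_Diff_subset[OF fin_any xS] card_subspace[OF sx] card_subspace[OF sS] by simp
  have le: "dim x \<le> dim S" using xS by (rule dim_mono')
  have Qle: "Q ^ dim x \<le> Q ^ dim S" using le Q_ge2 by (simp add: power_increasing)
  have Qle2: "Q ^ dim x \<le> Q ^ (dim x + 1)" using Q_ge2 by (simp add: power_increasing)
  have "Q ^ dim S - Q ^ dim x = card U * (Q ^ (dim x + 1) - Q ^ dim x)" using e1 e2 by simp
  then have "real (Q ^ dim S - Q ^ dim x) = real (card U * (Q ^ (dim x + 1) - Q ^ dim x))" by simp
  then have "real Q ^ dim S - real Q ^ dim x = real (card U) * (real Q ^ (dim x + 1) - real Q ^ dim x)"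
    using Qle Qle2 by (simp only: of_nat_diff of_nat_mult of_nat_power)
  moreover have "real Q ^ dim S = real Q ^ dim x * real Q ^ (dim S - dim x)"
    using le by (simp add: power_add[symmetric])
  ultimately have "real Q ^ dim x * (real Q ^ (dim S - dim x) - 1) = real Q ^ dim x * (real (card U) * (real Q - 1))"
    by (simp add: algebra_simps)
  moreover have "real Q ^ dim x \<noteq> 0" using Q_ge2 by simp
  ultimately have "real Q ^ (dim S - dim x) - 1 = real (card U) * (real Q - 1)"
    using mult_left_cancel by blast
  then show ?thesis unfolding U_def[symmetric] by (simp add: mult.commute)
qed

lemma complement:
  assumes sA: "subspace A" and sx: "subspace x" and Ax: "A \<subseteq> x"
  obtains c where "subspace c" "c \<subseteq> x" "ssum A c = x" "A \<inter> c = {0}" "dim c = dim x - dim A"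
proof -
  obtain B where B: "B \<subseteq> A" "independent B" "A \<subseteq> span B" "card B = dim A"
    using basis_exists by blast
  obtain B' where B': "B \<subseteq> B'" "B' \<subseteq> x" "independent B'" "x \<subseteq> span B'"
    using maximal_independent_subset_extend[of B x] B(1,2) Ax by blast
  have spB: "span B = A" using B sA span_subspace by blast
  have spB': "span B' = x" using B' sx span_subspace by blast
  define c where "c = span (B' - B)"
  have sc: "subspace c" unfolding c_def by simp
  have "B' - B \<subseteq> x" using B' by blast
  then have cx: "c \<subseteq> x" unfolding c_def using sx by (rule span_minimal)
  have sum: "ssum A c = x"
  proof -
    have "B' = B \<union> (B' - B)" using B' by auto
    then have "x = span (B \<union> (B' - B))" using spB' by simp
    also have "\<dots> = ssum (span B) (span (B' - B))" by (simp only: span_Un ssum_def)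
    finally show ?thesis using spB c_def by simp
  qed
  have ind: "independent (B' - B)" using B'(3) independent_mono by blast
  have dc: "dim c = dim x - dim A"
    unfolding c_def using dim_span_eq_card_independent[OF ind] dim_span_eq_card_independent[OF B'(3)]
      spB' B(4) B'(1) by (simp add: card_Diff_subset)
  have dA: "dim A \<le> dim x" using Ax by (rule dim_mono')
  have "dim (ssum A c) + dim (A \<inter> c) = dim A + dim c" using grass sA sc by blast
  then have "dim (A \<inter> c) = 0" using sum dc dA by simp
  then have "A \<inter> c = {0}" using dim_zero_sub sub_Int sA sc by blast
  then show ?thesis using that sc cx sum dc by blast
qed

definition Hc :: "'v set \<Rightarrow> 'v set set" where
  "Hc x = {z. subspace z \<and> z \<subseteq> x \<and> dim z + 1 = dim x}"

definition Ln :: "'v set \<Rightarrow> 'v set set" where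
  "Ln x = {l. subspace l \<and> l \<subseteq> x \<and> dim l = 1}"

lemma Ln_count: "subspace x \<Longrightarrow> (real Q - 1) * real (card (Ln x)) = real Q ^ dim x - 1"
proof -
  assume sx: "subspace x"
  have "Ln x = {z. subspace z \<and> {0} \<subseteq> z \<and> z \<subseteq> x \<and> dim z = dim {0} + 1}"
    unfolding Ln_def by (auto simp: subspace_0)
  then show ?thesis using up_count[OF sub_zero sx] sx subspace_0 by simp
qed

lemma hypA_bij:
  assumes sA: "subspace A" and sx: "subspace x" and Ax: "A \<subseteq> x"
    and sc: "subspace c" and cx: "c \<subseteq> x" and sum: "ssum A c = x" and int: "A \<inter> c = {0}"
    and dc: "dim c = dim x - dim A"
  shows "card {z \<in> Hc x. A \<subseteq> z} = card (Hc c)"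
proof -
  have dA: "dim A \<le> dim x" using Ax by (rule dim_mono')
  have f1: "z \<inter> c \<in> Hc c" if z: "z \<in> {z \<in> Hc x. A \<subseteq> z}" for z
  proof -
    have sz: "subspace z" "z \<subseteq> x" "dim z + 1 = dim x" "A \<subseteq> z" using z unfolding Hc_def by auto
    have "ssum z c \<subseteq> x" by (rule ssum_least[OF sz(2) cx sx])
    moreover have "ssum A c \<subseteq> ssum z c" by (rule sub_ssum_mono[OF sz(1) sc sz(4) order_refl])
    then have "x \<subseteq> ssum z c" using sum by simp
    ultimately have "ssum z c = x" by blast
    moreover have "dim (ssum z c) + dim (z \<inter> c) = dim z + dim c" using grass sz sc by blast
    ultimately have "dim (z \<inter> c) + 1 = dim c" using sz by simp
    then show ?thesis unfolding Hc_def using sz sc by (auto intro: sub_Int)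
  qed
  have g1: "ssum w A \<in> {z \<in> Hc x. A \<subseteq> z}" if w: "w \<in> Hc c" for w
  proof -
    have sw: "subspace w" "w \<subseteq> c" "dim w + 1 = dim c" using w unfolding Hc_def by auto
    have "w \<inter> A \<subseteq> {0}" using int sw by blast
    then have "dim (w \<inter> A) = 0" by (metis dim_mono' fd.dim_singleton le_zero_eq)
    moreover have "dim (ssum w A) + dim (w \<inter> A) = dim w + dim A" using grass sw sA by blast
    ultimately have "dim (ssum w A) + 1 = dim x" using sw dc dA by arith
    moreover have "ssum w A \<subseteq> x" using sw cx Ax sx by (intro ssum_least) auto
    moreover have "A \<subseteq> ssum w A" by (rule ssum_ge2[OF sw(1)])
    ultimately show ?thesis unfolding Hc_def using ssum_sub sw sA by auto
  qed
  have fg: "ssum (z \<inter> c) A = z" if z: "z \<in> {z \<in> Hc x. A \<subseteq> z}" for z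
  proof -
    have sz: "subspace z" "z \<subseteq> x" "A \<subseteq> z" using z unfolding Hc_def by auto
    have "ssum (z \<inter> c) A \<subseteq> z" using sz by (intro ssum_least) auto
    moreover have "z \<subseteq> ssum (z \<inter> c) A"
    proof
      fix u assume u: "u \<in> z"
      then have "u \<in> ssum A c" using sz sum by auto
      then obtain a w where aw: "u = a + w" "a \<in> A" "w \<in> c" unfolding ssum_def by auto
      have "w = u - a" using aw by simp
      then have "w \<in> z" using u aw sz subspace_diff by blast
      moreover have "u = w + a" using aw by (simp add: add.commute)
      ultimately show "u \<in> ssum (z \<inter> c) A" unfolding ssum_def using aw by blast
    qed
    ultimately show ?thesis by blast
  qed
  have gf: "ssum w A \<inter> c = w" if w: "w \<in> Hc c" for w
  proof -
    have sw: "subspace w" "w \<subseteq> c" using w unfolding Hc_def by auto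
    have "ssum w A \<inter> c \<subseteq> w"
    proof
      fix u assume u: "u \<in> ssum w A \<inter> c"
      then obtain w' a where aw: "u = w' + a" "w' \<in> w" "a \<in> A" unfolding ssum_def by auto
      have "a = u - w'" using aw by simp
      then have "a \<in> c" using u aw sw sc subspace_diff by blast
      then have "a = 0" using aw int by blast
      then show "u \<in> w" using aw by simp
    qed
    moreover have "w \<subseteq> ssum w A \<inter> c" using sw sA ssum_ge1 by blast
    ultimately show ?thesis by blast
  qed
  have "bij_betw (\<lambda>z. z \<inter> c) {z \<in> Hc x. A \<subseteq> z} (Hc c)"
  proof (rule bij_betw_byWitness[where f'="\<lambda>w. ssum w A"])
    show "\<forall>a\<in>{z \<in> Hc x. A \<subseteq> z}. ssum (a \<inter> c) A = a" using fg by blast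
    show "\<forall>a'\<in>Hc c. ssum a' A \<inter> c = a'" using gf by blast
    show "(\<lambda>z. z \<inter> c) ` {z \<in> Hc x. A \<subseteq> z} \<subseteq> Hc c" using f1 by blast
    show "(\<lambda>w. ssum w A) ` Hc c \<subseteq> {z \<in> Hc x. A \<subseteq> z}" using g1 by blast
  qed
  then show ?thesis by (rule bij_betw_same_card)
qed

lemma card_filter_sum: "finite B \<Longrightarrow> card {b\<in>B. P b} = (\<Sum>b\<in>B. if P b then 1 else 0)"
proof -
  assume f: "finite B"
  have "card {b\<in>B. P b} = (\<Sum>b\<in>{b\<in>B. P b}. 1)" by (rule card_eq_sum)
  also have "\<dots> = (\<Sum>b\<in>B. if P b then 1 else 0)" by (rule sum.inter_filter[OF f])
  finally show ?thesis .
qed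

lemma count_swap:
  assumes "finite A" "finite B"
  shows "(\<Sum>a\<in>A. card {b\<in>B. P a b}) = (\<Sum>b\<in>B. card {a\<in>A. P a b})"
proof -
  have "(\<Sum>a\<in>A. card {b\<in>B. P a b}) = (\<Sum>a\<in>A. \<Sum>b\<in>B. if P a b then 1 else 0)"
    using card_filter_sum[OF assms(2)] by (rule sum.cong[OF refl])
  also have "\<dots> = (\<Sum>b\<in>B. \<Sum>a\<in>A. if P a b then 1 else 0)" by (rule sum.swap)
  also have "\<dots> = (\<Sum>b\<in>B. card {a\<in>A. P a b})"
    using card_filter_sum[OF assms(1)] by (intro sum.cong[OF refl]) simp
  finally show ?thesis .
qed

lemma Hc_eq_Ln: "subspace x \<Longrightarrow> card (Hc x) = card (Ln x)"
proof (induction "dim x" arbitrary: x rule: less_induct)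
  case (less x)
  have sx: "subspace x" by fact
  consider "dim x = 0" | "dim x = 1" | "dim x \<ge> 2" by linarith
  then show ?case
  proof cases
    case 1
    have "Hc x = {}"
    proof (rule equals0I)
      fix z assume "z \<in> Hc x"
      then have "dim z + 1 = dim x" unfolding Hc_def by blast
      then show False using 1 by linarith
    qed
    moreover have "Ln x = {}"
    proof (rule equals0I)
      fix l assume "l \<in> Ln x"
      then have "l \<subseteq> x" "dim l = 1" unfolding Ln_def by blast+
      moreover have "dim l \<le> dim x" by (rule dim_mono'[OF \<open>l \<subseteq> x\<close>])
      ultimately show False using 1 by linarith
    qed
    ultimately show ?thesis by simp
  next
    case 2
    have "Hc x = {{0}}"
    proof (rule set_eqI)
      fix z show "z \<in> Hc x \<longleftrightarrow> z \<in> {{0}}"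
      proof
        assume "z \<in> Hc x"
        then have zz: "subspace z" "dim z + 1 = dim x" unfolding Hc_def by blast+
        then have "dim z = 0" using 2 by linarith
        then have "z = {0}" using dim_zero_sub[OF zz(1)] by simp
        then show "z \<in> {{0}}" by simp
      next
        assume "z \<in> {{0}}"
        then have "z = {0}" by simp
        moreover have "{0} \<subseteq> x" using sx subspace_0 by blast
        ultimately show "z \<in> Hc x" unfolding Hc_def using 2 sub_zero by simp
      qed
    qed
    moreover have "Ln x = {x}"
    proof (rule set_eqI)
      fix l show "l \<in> Ln x \<longleftrightarrow> l \<in> {x}"
      proof
        assume "l \<in> Ln x"
        then have l: "subspace l" "l \<subseteq> x" "dim l = 1" unfolding Ln_def by auto
        then have "l = x" using sub_eq_dim[OF l(1) sx l(2)] 2 by simp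
        then show "l \<in> {x}" by simp
      next
        assume "l \<in> {x}"
        then show "l \<in> Ln x" unfolding Ln_def using sx 2 by simp
      qed
    qed
    ultimately show ?thesis by simp
  next
    case 3
    define n where "n = dim x"
    define K where "K = (real Q ^ (n - 1) - 1) / (real Q - 1)"
    have Q1: "real Q - 1 > 0" using Q_ge2 by simp
    have Kpos: "K > 0"
    proof -
      have "1 < real Q ^ (n - 1)" using 3 Q_ge2 unfolding n_def by (intro one_less_power) auto
      then show ?thesis unfolding K_def using Q1 by simp
    qed
    have A: "real (card {l\<in>Ln x. l \<subseteq> z}) = K" if z: "z \<in> Hc x" for z
    proof -
      have zz: "subspace z" "z \<subseteq> x" "dim z + 1 = dim x" using z unfolding Hc_def by auto
      have "\<And>l. (l \<in> Ln x \<and> l \<subseteq> z) = (l \<in> Ln z)" using zz(2) unfolding Ln_def by auto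
      then have "{l\<in>Ln x. l \<subseteq> z} = Ln z" by blast
      moreover have "(real Q - 1) * real (card (Ln z)) = real Q ^ (n - 1) - 1"
      proof -
        have dz: "dim z = n - 1" using zz(3) unfolding n_def by linarith
        show ?thesis using Ln_count[OF zz(1)] unfolding dz .
      qed
      ultimately show ?thesis unfolding K_def using Q1 by (simp add: field_simps)
    qed
    have B: "real (card {z\<in>Hc x. l \<subseteq> z}) = K" if l: "l \<in> Ln x" for l
    proof -
      have ll: "subspace l" "l \<subseteq> x" "dim l = 1" using l unfolding Ln_def by auto
      obtain c where c: "subspace c" "c \<subseteq> x" "ssum l c = x" "l \<inter> c = {0}" "dim c = dim x - dim l"
        using complement[OF ll(1) sx ll(2)] by blast
      have "card {z\<in>Hc x. l \<subseteq> z} = card (Hc c)" by (rule hypA_bij[OF ll(1) sx ll(2) c])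
      also have "\<dots> = card (Ln c)"
      proof -
        have "dim c < dim x" using c(5) ll(3) 3 by linarith
        then show ?thesis by (rule less.hyps[OF _ c(1)])
      qed
      finally have "card {z\<in>Hc x. l \<subseteq> z} = card (Ln c)" .
      moreover have "(real Q - 1) * real (card (Ln c)) = real Q ^ (n - 1) - 1"
        using Ln_count[OF c(1)] c ll unfolding n_def by simp
      ultimately show ?thesis unfolding K_def using Q1 by (simp add: field_simps)
    qed
    have "(\<Sum>z\<in>Hc x. card {l\<in>Ln x. l \<subseteq> z}) = (\<Sum>l\<in>Ln x. card {z\<in>Hc x. l \<subseteq> z})"
      by (rule count_swap[OF fin_sets fin_sets])
    then have "real (\<Sum>z\<in>Hc x. card {l\<in>Ln x. l \<subseteq> z}) = real (\<Sum>l\<in>Ln x. card {z\<in>Hc x. l \<subseteq> z})"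
      by simp
    then have "(\<Sum>z\<in>Hc x. real (card {l\<in>Ln x. l \<subseteq> z})) = (\<Sum>l\<in>Ln x. real (card {z\<in>Hc x. l \<subseteq> z}))"
      by (simp only: of_nat_sum)
    moreover have "(\<Sum>z\<in>Hc x. real (card {l\<in>Ln x. l \<subseteq> z})) = (\<Sum>z\<in>Hc x. K)"
      using A by (rule sum.cong[OF refl])
    moreover have "(\<Sum>l\<in>Ln x. real (card {z\<in>Hc x. l \<subseteq> z})) = (\<Sum>l\<in>Ln x. K)"
      using B by (rule sum.cong[OF refl])
    ultimately have "(\<Sum>z\<in>Hc x. K) = (\<Sum>l\<in>Ln x. K)" by simp
    then have "real (card (Hc x)) * K = real (card (Ln x)) * K" by simp
    then show ?thesis using Kpos by simp
  qed
qed

lemma hyp_count: "subspace x \<Longrightarrow> (real Q - 1) * real (card (Hc x)) = real Q ^ dim x - 1"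
  using Hc_eq_Ln Ln_count by simp

lemma hypA_count:
  assumes sA: "subspace A" and sx: "subspace x" and Ax: "A \<subseteq> x"
  shows "(real Q - 1) * real (card {z \<in> Hc x. A \<subseteq> z}) = real Q ^ (dim x - dim A) - 1"
proof -
  obtain c where c: "subspace c" "c \<subseteq> x" "ssum A c = x" "A \<inter> c = {0}" "dim c = dim x - dim A"
    using complement[OF sA sx Ax] by blast
  have "card {z\<in>Hc x. A \<subseteq> z} = card (Hc c)" by (rule hypA_bij[OF sA sx Ax c])
  then show ?thesis using hyp_count[OF c(1)] c(5) by simp
qed

lemma card_prod_if: "finite S \<Longrightarrow> (\<Sum>z\<in>S. (if P z then 1 else 0) * (if R z then 1 else 0) :: complex)
   = of_nat (card {z\<in>S. P z \<and> R z})"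
proof -
  assume f: "finite S"
  have "(\<Sum>z\<in>S. (if P z then 1 else 0) * (if R z then 1 else 0) :: complex)
      = (\<Sum>z\<in>S. of_nat (if P z \<and> R z then 1 else 0))" by (rule sum.cong) auto
  also have "\<dots> = of_nat (\<Sum>z\<in>S. if P z \<and> R z then 1 else 0)" by (simp only: of_nat_sum)
  also have "\<dots> = of_nat (card {z\<in>S. P z \<and> R z})" using card_filter_sum[OF f, of "\<lambda>z. P z \<and> R z"] by simp
  finally show ?thesis .
qed

lemma ocomp_diag_right:
  assumes "x \<in> subspaces sc"
  shows "ocomp sc N (\<lambda>y x. if y = x \<and> x \<in> subspaces sc then m x else 0) y x = N y x * m x"
proof -
  have "ocomp sc N (\<lambda>y x. if y = x \<and> x \<in> subspaces sc then m x else 0) y x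
     = (\<Sum>z\<in>subspaces sc. if z = x then N y x * m x else 0)"
    unfolding ocomp_def using assms by (intro sum.cong) auto
  also have "\<dots> = N y x * m x" using assms by simp
  finally show ?thesis .
qed

lemma ocomp_diag_left:
  assumes "y \<in> subspaces sc"
  shows "ocomp sc (\<lambda>y x. if y = x \<and> x \<in> subspaces sc then m x else 0) N y x = m y * N y x"
proof -
  have "ocomp sc (\<lambda>y x. if y = x \<and> x \<in> subspaces sc then m x else 0) N y x
     = (\<Sum>z\<in>subspaces sc. if z = y then m y * N y x else 0)"
    unfolding ocomp_def using assms by (intro sum.cong) auto
  also have "\<dots> = m y * N y x" using assms by simp
  finally show ?thesis .
qed

lemma oinv_diag:
  assumes nz: "\<forall>x\<in>subspaces sc. m x \<noteq> 0"
  shows "oinv sc (\<lambda>y x. if y = x \<and> x \<in> subspaces sc then m x else 0)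
       = (\<lambda>y x. if y = x \<and> x \<in> subspaces sc then 1 / m x else 0)"
  unfolding oinv_def
proof (rule the_equality)
  let ?M = "\<lambda>y x. if y = x \<and> x \<in> subspaces sc then m x else 0"
  let ?N = "\<lambda>y x. if y = x \<and> x \<in> subspaces sc then 1 / m x else (0::complex)"
  show "(\<forall>y x. (y \<notin> subspaces sc \<or> x \<notin> subspaces sc) \<longrightarrow> ?N y x = 0) \<and>
      (\<forall>y\<in>subspaces sc. \<forall>x\<in>subspaces sc. ocomp sc ?N ?M y x = oid y x \<and> ocomp sc ?M ?N y x = oid y x)"
  proof (intro conjI allI ballI impI)
    fix y x assume "y \<notin> subspaces sc \<or> x \<notin> subspaces sc"
    then show "?N y x = 0" by auto
  next
    fix y x assume y: "y \<in> subspaces sc" and x: "x \<in> subspaces sc"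
    show "ocomp sc ?N ?M y x = oid y x"
      unfolding ocomp_diag_right[OF x] using nz x by (simp add: oid_def)
    show "ocomp sc ?M ?N y x = oid y x"
      unfolding ocomp_diag_left[OF y] using nz y x by (cases "y = x") (auto simp: oid_def)
  qed
next
  let ?M = "\<lambda>y x. if y = x \<and> x \<in> subspaces sc then m x else 0"
  fix N assume N: "(\<forall>y x. (y \<notin> subspaces sc \<or> x \<notin> subspaces sc) \<longrightarrow> N y x = 0) \<and>
      (\<forall>y\<in>subspaces sc. \<forall>x\<in>subspaces sc. ocomp sc N ?M y x = oid y x \<and> ocomp sc ?M N y x = oid y x)"
  show "N = (\<lambda>y x. if y = x \<and> x \<in> subspaces sc then 1 / m x else 0)"
  proof (intro ext)
    fix y x
    show "N y x = (if y = x \<and> x \<in> subspaces sc then 1 / m x else 0)"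
    proof (cases "y \<in> subspaces sc \<and> x \<in> subspaces sc")
      case True
      then have "N y x * m x = oid y x" using N ocomp_diag_right[of x N m y] by auto
      then show ?thesis using True nz by (cases "y = x") (auto simp: oid_def field_simps)
    next
      case False
      then show ?thesis using N by auto
    qed
  qed
qed

end

locale setting = fvs sc for sc :: "'f::{field,finite} \<Rightarrow> 'v::ab_group_add \<Rightarrow> 'v" +
  fixes x0 x1 :: "'v set"
  assumes sx0: "subspace x0" and sx1: "subspace x1"
    and sum01: "ssum x0 x1 = UNIV" and int01: "x0 \<inter> x1 = {0}"
begin

lemma proj0_spec: "proj0 x0 x1 u \<in> x0 \<and> u - proj0 x0 x1 u \<in> x1"
  unfolding proj0_def
proof (rule theI')
  have "u \<in> ssum x0 x1" using sum01 by simp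
  then obtain a b where ab: "u = a + b" "a \<in> x0" "b \<in> x1" unfolding ssum_def by blast
  then have ex: "a \<in> x0 \<and> u - a \<in> x1" by simp
  show "\<exists>!a. a \<in> x0 \<and> u - a \<in> x1"
  proof (rule ex1I[of _ a])
    show "a \<in> x0 \<and> u - a \<in> x1" by (rule ex)
    fix a' assume a': "a' \<in> x0 \<and> u - a' \<in> x1"
    have "a' - a \<in> x0" using a' ab sx0 subspace_diff by blast
    moreover have "(u - a) - (u - a') \<in> x1" using a' ex sx1 subspace_diff by blast
    moreover have "(u - a) - (u - a') = a' - a" by simp
    ultimately have "a' - a \<in> x0 \<inter> x1" by simp
    then show "a' = a" using int01 by simp
  qed
qed

lemma proj0_diff: "a - b \<in> x0 \<Longrightarrow> proj0 x0 x1 a - proj0 x0 x1 b = a - b"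
proof -
  assume d: "a - b \<in> x0"
  define pa where "pa = proj0 x0 x1 a"
  define pb where "pb = proj0 x0 x1 b"
  have pa: "pa \<in> x0" "a - pa \<in> x1" using proj0_spec pa_def by auto
  have pb: "pb \<in> x0" "b - pb \<in> x1" using proj0_spec pb_def by auto
  have "(a - pa) - (b - pb) \<in> x1" using pa pb sx1 subspace_diff by blast
  moreover have "(a - b) - (pa - pb) \<in> x0" using d pa pb sx0 subspace_diff by blast
  moreover have "(a - pa) - (b - pb) = (a - b) - (pa - pb)" by (simp add: algebra_simps)
  ultimately have "(a - b) - (pa - pb) \<in> x0 \<inter> x1" by simp
  then have "(a - b) - (pa - pb) = 0" using int01 by simp
  then show ?thesis unfolding pa_def[symmetric] pb_def[symmetric] by simp
qed

lemma coset_eq_iff: "subspace W \<Longrightarrow> coset W u = coset W v \<longleftrightarrow> u - v \<in> W"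
proof
  assume W: "subspace W" and e: "coset W u = coset W v"
  have "u \<in> coset W u" unfolding coset_def using subspace_0[OF W] by force
  then have "u \<in> coset W v" using e by simp
  then obtain w where "u = v + w" "w \<in> W" unfolding coset_def by blast
  then show "u - v \<in> W" by simp
next
  assume W: "subspace W" and d: "u - v \<in> W"
  show "coset W u = coset W v"
  proof (rule set_eqI)
    fix t
    show "t \<in> coset W u \<longleftrightarrow> t \<in> coset W v"
    proof
      assume "t \<in> coset W u"
      then obtain w where w: "t = u + w" "w \<in> W" unfolding coset_def by blast
      have "t = v + ((u - v) + w)" using w by simp
      moreover have "(u - v) + w \<in> W" using d w W subspace_add by blast
      ultimately show "t \<in> coset W v" unfolding coset_def by blast
    next
      assume "t \<in> coset W v"
      then obtain w where w: "t = v + w" "w \<in> W" unfolding coset_def by blast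
      have "t = u + (w - (u - v))" using w by simp
      moreover have "w - (u - v) \<in> W" using d w W subspace_diff by blast
      ultimately show "t \<in> coset W u" unfolding coset_def by blast
    qed
  qed
qed

lemma tau_union:
  assumes sx: "subspace x" and sy: "subspace y"
    and Seq: "ssum y x0 = ssum x x0" and Aeq: "y \<inter> x0 = x \<inter> x0"
  shows "(\<Union>C\<in>qdom x0 x. tau_diff x0 x1 y x C) = ssum x y \<inter> x0"
proof -
  define A where "A = x \<inter> x0"
  have sA: "subspace A" unfolding A_def using sx sx0 by (rule subspace_inter)
  have Ax: "A \<subseteq> x" "A \<subseteq> x0" "A \<subseteq> y" using Aeq unfolding A_def by blast+
  have rep: "\<exists>u. u \<in> x \<and> coset x0 u = coset x0 w" if "w \<in> x" for w using that by blast
  have repy: "\<exists>u. u \<in> y \<and> coset x0 u = coset x0 w" if w: "w \<in> x" for w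
  proof -
    have "w \<in> ssum y x0" using Seq w ssum_ge1[OF sx0] by blast
    then obtain u t where ut: "w = u + t" "u \<in> y" "t \<in> x0" unfolding ssum_def by blast
    have "u - w \<in> x0" using ut subspace_neg[OF sx0] by (simp add: algebra_simps)
    then have "coset x0 u = coset x0 w" using coset_eq_iff[OF sx0] by blast
    then show ?thesis using ut by blast
  qed
  have td: "tau_diff x0 x1 y x (coset x0 w) = {(uy - ux) + (t1 - t2) | t1 t2. t1 \<in> A \<and> t2 \<in> A}
       \<and> ux \<in> x \<and> uy \<in> y \<and> ux - w \<in> x0 \<and> uy - w \<in> x0"
    if w: "w \<in> x" and ux_def: "ux = (SOME u. u \<in> x \<and> coset x0 u = coset x0 w)"
      and uy_def: "uy = (SOME u. u \<in> y \<and> coset x0 u = coset x0 w)" for w ux uy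
  proof -
    have ux: "ux \<in> x \<and> coset x0 ux = coset x0 w" unfolding ux_def by (rule someI_ex[OF rep[OF w]])
    have uy: "uy \<in> y \<and> coset x0 uy = coset x0 w" unfolding uy_def by (rule someI_ex[OF repy[OF w]])
    have dx: "ux - w \<in> x0" using ux coset_eq_iff[OF sx0] by blast
    have dy: "uy - w \<in> x0" using uy coset_eq_iff[OF sx0] by blast
    have "uy - ux = (uy - w) - (ux - w)" by simp
    then have dxy: "uy - ux \<in> x0" using dx dy sx0 subspace_diff by metis
    have tx: "tau x0 x1 x (coset x0 w) = coset A (proj0 x0 x1 ux)"
      unfolding tau_def Let_def ux_def A_def by simp
    have ty: "tau x0 x1 y (coset x0 w) = coset A (proj0 x0 x1 uy)"
      unfolding tau_def Let_def uy_def A_def Aeq by simp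
    have pd: "proj0 x0 x1 uy - proj0 x0 x1 ux = uy - ux" using proj0_diff[OF dxy] .
    have "tau_diff x0 x1 y x (coset x0 w) = {(uy - ux) + (t1 - t2) | t1 t2. t1 \<in> A \<and> t2 \<in> A}"
    proof (rule set_eqI)
      fix v
      show "v \<in> tau_diff x0 x1 y x (coset x0 w) \<longleftrightarrow> v \<in> {(uy - ux) + (t1 - t2) | t1 t2. t1 \<in> A \<and> t2 \<in> A}"
      proof
        assume "v \<in> tau_diff x0 x1 y x (coset x0 w)"
        then obtain p r where pr: "v = p - r" "p \<in> coset A (proj0 x0 x1 uy)" "r \<in> coset A (proj0 x0 x1 ux)"
          unfolding tau_diff_def tx ty by blast
        obtain t1 where t1: "p = proj0 x0 x1 uy + t1" "t1 \<in> A" using pr(2) unfolding coset_def by blast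
        obtain t2 where t2: "r = proj0 x0 x1 ux + t2" "t2 \<in> A" using pr(3) unfolding coset_def by blast
        have "v = (proj0 x0 x1 uy - proj0 x0 x1 ux) + (t1 - t2)" using pr t1 t2 by (simp add: algebra_simps)
        then have "v = (uy - ux) + (t1 - t2)" using pd by simp
        then show "v \<in> {(uy - ux) + (t1 - t2) | t1 t2. t1 \<in> A \<and> t2 \<in> A}" using t1 t2 by blast
      next
        assume "v \<in> {(uy - ux) + (t1 - t2) | t1 t2. t1 \<in> A \<and> t2 \<in> A}"
        then obtain t1 t2 where t: "v = (uy - ux) + (t1 - t2)" "t1 \<in> A" "t2 \<in> A" by blast
        have "proj0 x0 x1 uy + t1 \<in> coset A (proj0 x0 x1 uy)" using t unfolding coset_def by blast
        moreover have "proj0 x0 x1 ux + t2 \<in> coset A (proj0 x0 x1 ux)" using t unfolding coset_def by blast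
        moreover have "v = (proj0 x0 x1 uy + t1) - (proj0 x0 x1 ux + t2)"
        proof -
          have "(proj0 x0 x1 uy + t1) - (proj0 x0 x1 ux + t2) = (proj0 x0 x1 uy - proj0 x0 x1 ux) + (t1 - t2)"
            by (simp add: algebra_simps)
          then show ?thesis using t pd by simp
        qed
        ultimately show "v \<in> tau_diff x0 x1 y x (coset x0 w)" unfolding tau_diff_def tx ty by blast
      qed
    qed
    then show ?thesis using ux uy dx dy by blast
  qed
  show ?thesis
  proof
    show "(\<Union>C\<in>qdom x0 x. tau_diff x0 x1 y x C) \<subseteq> ssum x y \<inter> x0"
    proof
      fix v assume "v \<in> (\<Union>C\<in>qdom x0 x. tau_diff x0 x1 y x C)"
      then obtain w where w: "w \<in> x" "v \<in> tau_diff x0 x1 y x (coset x0 w)" unfolding qdom_def by blast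
      define ux where "ux = (SOME u. u \<in> x \<and> coset x0 u = coset x0 w)"
      define uy where "uy = (SOME u. u \<in> y \<and> coset x0 u = coset x0 w)"
      note T = td[OF w(1) ux_def uy_def]
      obtain t1 t2 where t: "v = (uy - ux) + (t1 - t2)" "t1 \<in> A" "t2 \<in> A" using T w(2) by blast
      have "uy - ux = (uy - w) - (ux - w)" by simp
      then have dxy: "uy - ux \<in> x0" using T sx0 subspace_diff by metis
      have "t1 - t2 \<in> x0" using t Ax sx0 subspace_diff by blast
      then have v0: "v \<in> x0" using t dxy sx0 subspace_add by metis
      have "-ux - t2 \<in> x" using T t Ax sx subspace_diff subspace_neg by blast
      moreover have "uy + t1 \<in> y" using T t Ax sy subspace_add by blast
      moreover have "v = (-ux - t2) + (uy + t1)" using t by (simp add: algebra_simps)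
      ultimately have "v \<in> ssum x y" unfolding ssum_def by blast
      then show "v \<in> ssum x y \<inter> x0" using v0 by blast
    qed
    show "ssum x y \<inter> x0 \<subseteq> (\<Union>C\<in>qdom x0 x. tau_diff x0 x1 y x C)"
    proof
      fix v assume v: "v \<in> ssum x y \<inter> x0"
      then obtain a b where ab: "v = a + b" "a \<in> x" "b \<in> y" unfolding ssum_def by blast
      define w where "w = -a"
      have w: "w \<in> x" unfolding w_def using ab sx subspace_neg by blast
      define ux where "ux = (SOME u. u \<in> x \<and> coset x0 u = coset x0 w)"
      define uy where "uy = (SOME u. u \<in> y \<and> coset x0 u = coset x0 w)"
      note T = td[OF w ux_def uy_def]
      have "ux - w \<in> x" using T w sx subspace_diff by blast
      then have t2: "-(ux - w) \<in> A" using T sA subspace_neg unfolding A_def by blast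
      have "b - w = v" using ab unfolding w_def by (simp add: algebra_simps)
      then have bw: "b - w \<in> x0" using v by simp
      have "b - uy = (b - w) - (uy - w)" by simp
      then have "b - uy \<in> x0" using bw T sx0 subspace_diff by metis
      moreover have "b - uy \<in> y" using ab T sy subspace_diff by blast
      ultimately have t1: "b - uy \<in> A" unfolding A_def using Aeq by blast
      have "v = (uy - ux) + ((b - uy) - (-(ux - w)))" using ab unfolding w_def by (simp add: algebra_simps)
      then have "v \<in> tau_diff x0 x1 y x (coset x0 w)" using T t1 t2 by blast
      moreover have "coset x0 w \<in> qdom x0 x" unfolding qdom_def using w by blast
      ultimately show "v \<in> (\<Union>C\<in>qdom x0 x. tau_diff x0 x1 y x C)" by blast
    qed
  qed
qed

lemma mem_subspaces: "x \<in> subspaces sc \<longleftrightarrow> subspace x"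
  by (simp add: subspaces_def)

lemma covby_iff: "covby sc a b \<longleftrightarrow> subspace a \<and> subspace b \<and> a \<subseteq> b \<and> dim a + 1 = dim b"
  by (simp add: covby_def mem_subspaces)

lemma ssum_ssum:
  assumes sx: "subspace x" and sy: "subspace y" and Seq: "ssum y x0 = ssum x x0"
  shows "ssum (ssum x y) x0 = ssum x x0"
proof
  have "y \<subseteq> ssum x x0" using ssum_ge1[OF sx0, of y] Seq by simp
  then have "ssum x y \<subseteq> ssum x x0" by (rule ssum_least[OF ssum_ge1[OF sx0] _ ssum_sub[OF sx sx0]])
  then show "ssum (ssum x y) x0 \<subseteq> ssum x x0" by (rule ssum_least[OF _ ssum_ge2[OF sx] ssum_sub[OF sx sx0]])
  show "ssum x x0 \<subseteq> ssum (ssum x y) x0"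
    by (rule sub_ssum_mono[OF ssum_sub[OF sx sy] sx0 ssum_ge1[OF sy] order_refl])
qed

lemma hyp_sum:
  assumes sx: "subspace x" and z: "z \<in> Hc x"
  shows "ssum z x0 = ssum x x0 \<longleftrightarrow> \<not> (x \<inter> x0 \<subseteq> z)"
proof -
  have zz: "subspace z" "z \<subseteq> x" "dim z + 1 = dim x" using z unfolding Hc_def by auto
  have gx: "dim (ssum x x0) + dim (x \<inter> x0) = dim x + dim x0" by (rule grass[OF sx sx0])
  have gz: "dim (ssum z x0) + dim (z \<inter> x0) = dim z + dim x0" by (rule grass[OF zz(1) sx0])
  have sub: "ssum z x0 \<subseteq> ssum x x0" by (rule sub_ssum_mono[OF sx sx0 zz(2) order_refl])
  show ?thesis
  proof
    assume e: "ssum z x0 = ssum x x0"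
    show "\<not> (x \<inter> x0 \<subseteq> z)"
    proof
      assume "x \<inter> x0 \<subseteq> z"
      then have "z \<inter> x0 = x \<inter> x0" using zz(2) by blast
      then have "dim (z \<inter> x0) = dim (x \<inter> x0)" by simp
      moreover have "dim (ssum z x0) = dim (ssum x x0)" using e by simp
      ultimately show False using gx gz zz(3) by linarith
    qed
  next
    assume n: "\<not> (x \<inter> x0 \<subseteq> z)"
    have "z \<inter> x0 \<subseteq> x \<inter> x0" using zz(2) by blast
    moreover have "z \<inter> x0 \<noteq> x \<inter> x0" using n by blast
    ultimately have "dim (z \<inter> x0) < dim (x \<inter> x0)"
      using dim_less[OF sub_Int[OF zz(1) sx0] sub_Int[OF sx sx0]] by blast
    then have "dim (ssum x x0) \<le> dim (ssum z x0)" using gx gz zz(3) by linarith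
    then show "ssum z x0 = ssum x x0"
      using sub_eq_dim[OF ssum_sub[OF zz(1) sx0] ssum_sub[OF sx sx0] sub] by blast
  qed
qed

lemma up_set:
  assumes sx: "subspace x"
  shows "{z\<in>subspaces sc. (covby sc x z \<and> ssum x x0 = ssum z x0) \<and> (covby sc x z \<and> ssum z x0 = ssum x x0)}
       = {z. subspace z \<and> x \<subseteq> z \<and> z \<subseteq> ssum x x0 \<and> dim z = dim x + 1}"
proof (rule set_eqI)
  fix z
  show "z \<in> {z\<in>subspaces sc. (covby sc x z \<and> ssum x x0 = ssum z x0) \<and> (covby sc x z \<and> ssum z x0 = ssum x x0)}
       \<longleftrightarrow> z \<in> {z. subspace z \<and> x \<subseteq> z \<and> z \<subseteq> ssum x x0 \<and> dim z = dim x + 1}"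
  proof
    assume "z \<in> {z\<in>subspaces sc. (covby sc x z \<and> ssum x x0 = ssum z x0) \<and> (covby sc x z \<and> ssum z x0 = ssum x x0)}"
    then have "covby sc x z" "ssum z x0 = ssum x x0" by blast+
    then have zz: "subspace z" "x \<subseteq> z" "dim x + 1 = dim z" "ssum z x0 = ssum x x0"
      unfolding covby_iff by simp_all
    have "z \<subseteq> ssum x x0" using ssum_ge1[OF sx0, of z] zz(4) by simp
    then show "z \<in> {z. subspace z \<and> x \<subseteq> z \<and> z \<subseteq> ssum x x0 \<and> dim z = dim x + 1}" using zz by simp
  next
    assume "z \<in> {z. subspace z \<and> x \<subseteq> z \<and> z \<subseteq> ssum x x0 \<and> dim z = dim x + 1}"
    then have zz: "subspace z" "x \<subseteq> z" "z \<subseteq> ssum x x0" "dim z = dim x + 1" by auto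
    have "ssum z x0 \<subseteq> ssum x x0"
      using ssum_least[OF zz(3) ssum_ge2[OF sx, of x0] ssum_sub[OF sx sx0]] .
    moreover have "ssum x x0 \<subseteq> ssum z x0" by (rule sub_ssum_mono[OF zz(1) sx0 zz(2) order_refl])
    ultimately have "ssum z x0 = ssum x x0" by (rule antisym)
    then show "z \<in> {z\<in>subspaces sc. (covby sc x z \<and> ssum x x0 = ssum z x0) \<and> (covby sc x z \<and> ssum z x0 = ssum x x0)}"
      using zz sx by (simp add: covby_iff mem_subspaces)
  qed
qed

lemma down_set:
  assumes sx: "subspace x"
  shows "{z\<in>subspaces sc. (covby sc z x \<and> ssum x x0 = ssum z x0) \<and> (covby sc z x \<and> ssum z x0 = ssum x x0)}
       = Hc x - {z\<in>Hc x. x \<inter> x0 \<subseteq> z}"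
proof (rule set_eqI)
  fix z
  have "z \<in> {z\<in>subspaces sc. (covby sc z x \<and> ssum x x0 = ssum z x0) \<and> (covby sc z x \<and> ssum z x0 = ssum x x0)}
     \<longleftrightarrow> z \<in> Hc x \<and> ssum z x0 = ssum x x0"
  proof
    assume "z \<in> {z\<in>subspaces sc. (covby sc z x \<and> ssum x x0 = ssum z x0) \<and> (covby sc z x \<and> ssum z x0 = ssum x x0)}"
    then have "covby sc z x" "ssum z x0 = ssum x x0" by blast+
    then show "z \<in> Hc x \<and> ssum z x0 = ssum x x0" unfolding covby_iff Hc_def by simp
  next
    assume "z \<in> Hc x \<and> ssum z x0 = ssum x x0"
    then have a: "subspace z" "z \<subseteq> x" "dim z + 1 = dim x" "ssum z x0 = ssum x x0" unfolding Hc_def by simp_all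
    then have "covby sc z x" unfolding covby_iff using sx by simp
    then show "z \<in> {z\<in>subspaces sc. (covby sc z x \<and> ssum x x0 = ssum z x0) \<and> (covby sc z x \<and> ssum z x0 = ssum x x0)}"
      using a by (simp add: mem_subspaces)
  qed
  also have "\<dots> \<longleftrightarrow> z \<in> Hc x - {z\<in>Hc x. x \<inter> x0 \<subseteq> z}"
    using hyp_sum[OF sx] by blast
  finally show "z \<in> {z\<in>subspaces sc. (covby sc z x \<and> ssum x x0 = ssum z x0) \<and> (covby sc z x \<and> ssum z x0 = ssum x x0)}
     \<longleftrightarrow> z \<in> Hc x - {z\<in>Hc x. x \<inter> x0 \<subseteq> z}" .
qed

definition P1 :: "'v set \<Rightarrow> 'v set \<Rightarrow> bool" where
  "P1 x y \<longleftrightarrow> dim y = dim x \<and> dim (x \<inter> y) + 1 = dim x \<and> ssum y x0 = ssum x x0"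

lemma up_off:
  assumes sx: "subspace x" and sy: "subspace y" and ne: "y \<noteq> x"
  shows "{z\<in>subspaces sc. (covby sc y z \<and> ssum y x0 = ssum z x0) \<and> (covby sc x z \<and> ssum z x0 = ssum x x0)}
       = (if P1 x y then {ssum x y} else {})"
proof -
  let ?T = "{z\<in>subspaces sc. (covby sc y z \<and> ssum y x0 = ssum z x0) \<and> (covby sc x z \<and> ssum z x0 = ssum x x0)}"
  have gxy: "dim (ssum x y) + dim (x \<inter> y) = dim x + dim y" by (rule grass[OF sx sy])
  have A: "z = ssum x y \<and> P1 x y" if z: "z \<in> ?T" for z
  proof -
    have m: "covby sc y z" "ssum y x0 = ssum z x0" "covby sc x z" "ssum z x0 = ssum x x0"
      using z by blast+
    have zz: "subspace z" "y \<subseteq> z" "dim y + 1 = dim z" "x \<subseteq> z" "dim x + 1 = dim z"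
      "ssum y x0 = ssum z x0" "ssum z x0 = ssum x x0"
      using m unfolding covby_iff by blast+
    have le: "ssum x y \<subseteq> z" by (rule ssum_least[OF zz(4) zz(2) zz(1)])
    have xs: "x \<subseteq> ssum x y" by (rule ssum_ge1[OF sy])
    have "x \<noteq> ssum x y"
    proof
      assume "x = ssum x y"
      then have "y \<subseteq> x" using ssum_ge2[OF sx, of y] by simp
      then have "y = x" using sub_eq_dim[OF sy sx] zz(3) zz(5) by simp
      then show False using ne by simp
    qed
    then have "dim x < dim (ssum x y)" using dim_less[OF sx ssum_sub[OF sx sy] xs] by blast
    moreover have "dim (ssum x y) \<le> dim z" using le by (rule dim_mono')
    ultimately have d: "dim z \<le> dim (ssum x y)" using zz(5) by linarith
    have "ssum x y = z" by (rule sub_eq_dim[OF ssum_sub[OF sx sy] zz(1) le d])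
    moreover have "P1 x y" unfolding P1_def using gxy zz d \<open>ssum x y = z\<close> by auto
    ultimately show ?thesis by simp
  qed
  have B: "ssum x y \<in> ?T" if p: "P1 x y"
  proof -
    have pp: "dim y = dim x" "dim (x \<inter> y) + 1 = dim x" "ssum y x0 = ssum x x0" using p unfolding P1_def by auto
    have d: "dim (ssum x y) = dim x + 1" using gxy pp by linarith
    have e: "ssum (ssum x y) x0 = ssum x x0" by (rule ssum_ssum[OF sx sy pp(3)])
    show ?thesis using sx sy ssum_sub[OF sx sy] ssum_ge1[OF sy, of x] ssum_ge2[OF sx, of y] d pp e
      by (simp add: covby_iff mem_subspaces)
  qed
  show ?thesis
  proof (cases "P1 x y")
    case True
    have "?T = {ssum x y}"
    proof (rule set_eqI)
      fix z show "z \<in> ?T \<longleftrightarrow> z \<in> {ssum x y}" using A B[OF True] by blast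
    qed
    then show ?thesis using True by simp
  next
    case False
    have "?T = {}"
    proof (rule equals0I)
      fix z assume "z \<in> ?T" then show False using A False by blast
    qed
    then show ?thesis using False by simp
  qed
qed

lemma down_off:
  assumes sx: "subspace x" and sy: "subspace y" and ne: "y \<noteq> x"
  shows "{z\<in>subspaces sc. (covby sc z y \<and> ssum y x0 = ssum z x0) \<and> (covby sc z x \<and> ssum z x0 = ssum x x0)}
       = (if P1 x y \<and> ssum (x \<inter> y) x0 = ssum x x0 then {x \<inter> y} else {})"
proof -
  let ?P = "P1 x y \<and> ssum (x \<inter> y) x0 = ssum x x0"
  let ?T = "{z\<in>subspaces sc. (covby sc z y \<and> ssum y x0 = ssum z x0) \<and> (covby sc z x \<and> ssum z x0 = ssum x x0)}"
  have gxy: "dim (ssum x y) + dim (x \<inter> y) = dim x + dim y" by (rule grass[OF sx sy])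
  have sw: "subspace (x \<inter> y)" by (rule sub_Int[OF sx sy])
  have A: "z = x \<inter> y \<and> ?P" if z: "z \<in> ?T" for z
  proof -
    have m: "covby sc z y" "ssum y x0 = ssum z x0" "covby sc z x" "ssum z x0 = ssum x x0"
      using z by blast+
    have zz: "subspace z" "z \<subseteq> y" "dim z + 1 = dim y" "z \<subseteq> x" "dim z + 1 = dim x"
      "ssum y x0 = ssum z x0" "ssum z x0 = ssum x x0"
      using m unfolding covby_iff by blast+
    have le: "z \<subseteq> x \<inter> y" using zz by blast
    have xs: "x \<inter> y \<subseteq> x" by blast
    have "x \<inter> y \<noteq> x"
    proof
      assume "x \<inter> y = x"
      then have "x \<subseteq> y" by blast
      then have "x = y" using sub_eq_dim[OF sx sy] zz(3) zz(5) by simp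
      then show False using ne by simp
    qed
    then have "dim (x \<inter> y) < dim x" using dim_less[OF sw sx xs] by blast
    moreover have "dim z \<le> dim (x \<inter> y)" using le by (rule dim_mono')
    ultimately have d: "dim (x \<inter> y) \<le> dim z" using zz(5) by linarith
    have "z = x \<inter> y" by (rule sub_eq_dim[OF zz(1) sw le d])
    moreover have "?P" unfolding P1_def using zz d \<open>z = x \<inter> y\<close> by auto
    ultimately show ?thesis by simp
  qed
  have B: "x \<inter> y \<in> ?T" if p: "?P"
  proof -
    have pp: "dim y = dim x" "dim (x \<inter> y) + 1 = dim x" "ssum y x0 = ssum x x0" "ssum (x \<inter> y) x0 = ssum x x0"
      using p unfolding P1_def by auto
    show ?thesis using sx sy sw pp by (simp add: covby_iff mem_subspaces)
  qed
  show ?thesis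
  proof (cases "?P")
    case True
    have "?T = {x \<inter> y}"
    proof (rule set_eqI)
      fix z show "z \<in> ?T \<longleftrightarrow> z \<in> {x \<inter> y}" using A B[OF True] by blast
    qed
    then show ?thesis using True by simp
  next
    case False
    have "?T = {}"
    proof (rule equals0I)
      fix z assume "z \<in> ?T" then show False using A False by blast
    qed
    moreover have "(if ?P then {x \<inter> y} else {}) = {}" using False by (simp only: if_False)
    ultimately show ?thesis by (rule trans[OF _ sym])
  qed
qed

lemma off_equiv:
  assumes sx: "subspace x" and sy: "subspace y"
  shows "(P1 x y \<and> ssum (x \<inter> y) x0 \<noteq> ssum x x0) \<longleftrightarrow>
    (ssum y x0 = ssum x x0 \<and> y \<inter> x0 = x \<inter> x0 \<and> tau_rank sc x0 x1 y x = 1)"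
proof -
  define w where "w = x \<inter> y"
  have sw: "subspace w" unfolding w_def by (rule sub_Int[OF sx sy])
  have gx: "dim (ssum x x0) + dim (x \<inter> x0) = dim x + dim x0" by (rule grass[OF sx sx0])
  have gy: "dim (ssum y x0) + dim (y \<inter> x0) = dim y + dim x0" by (rule grass[OF sy sx0])
  have gw: "dim (ssum w x0) + dim (w \<inter> x0) = dim w + dim x0" by (rule grass[OF sw sx0])
  have gxy: "dim (ssum x y) + dim w = dim x + dim y" unfolding w_def by (rule grass[OF sx sy])
  have gU: "dim (ssum (ssum x y) x0) + dim (ssum x y \<inter> x0) = dim (ssum x y) + dim x0"
    by (rule grass[OF ssum_sub[OF sx sy] sx0])
  have rank: "tau_rank sc x0 x1 y x = dim (ssum x y \<inter> x0) - dim (x \<inter> x0)"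
    if Seq: "ssum y x0 = ssum x x0" and Aeq: "y \<inter> x0 = x \<inter> x0"
    unfolding tau_rank_def tau_union[OF sx sy Seq Aeq] by simp
  show ?thesis
  proof
    assume h: "P1 x y \<and> ssum (x \<inter> y) x0 \<noteq> ssum x x0"
    have pp: "dim y = dim x" "dim w + 1 = dim x" "ssum y x0 = ssum x x0" "ssum w x0 \<noteq> ssum x x0"
      using h unfolding P1_def w_def by auto
    have sub: "ssum w x0 \<subseteq> ssum x x0" by (rule sub_ssum_mono[OF sx sx0 _ order_refl]) (simp add: w_def)
    have "dim (ssum w x0) < dim (ssum x x0)"
      using dim_less[OF ssum_sub[OF sw sx0] ssum_sub[OF sx sx0] sub pp(4)] .
    then have "dim (x \<inter> x0) \<le> dim (w \<inter> x0)" using gx gw pp by linarith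
    moreover have wx: "w \<inter> x0 \<subseteq> x \<inter> x0" unfolding w_def by blast
    ultimately have e1: "w \<inter> x0 = x \<inter> x0" using sub_eq_dim[OF sub_Int[OF sw sx0] sub_Int[OF sx sx0]] by blast
    have "dim (y \<inter> x0) \<le> dim (w \<inter> x0)" using gx gy pp e1 by simp
    moreover have wy: "w \<inter> x0 \<subseteq> y \<inter> x0" unfolding w_def by blast
    ultimately have e2: "w \<inter> x0 = y \<inter> x0" using sub_eq_dim[OF sub_Int[OF sw sx0] sub_Int[OF sy sx0]] by blast
    have Aeq: "y \<inter> x0 = x \<inter> x0" using e1 e2 by simp
    have "ssum (ssum x y) x0 = ssum x x0" by (rule ssum_ssum[OF sx sy pp(3)])
    then have "dim (ssum x y \<inter> x0) = dim (x \<inter> x0) + 1" using gU gx gxy pp by simp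
    then have "tau_rank sc x0 x1 y x = 1" using rank[OF pp(3) Aeq] by simp
    then show "ssum y x0 = ssum x x0 \<and> y \<inter> x0 = x \<inter> x0 \<and> tau_rank sc x0 x1 y x = 1"
      using pp Aeq by simp
  next
    assume h: "ssum y x0 = ssum x x0 \<and> y \<inter> x0 = x \<inter> x0 \<and> tau_rank sc x0 x1 y x = 1"
    then have Seq: "ssum y x0 = ssum x x0" and Aeq: "y \<inter> x0 = x \<inter> x0" and r: "tau_rank sc x0 x1 y x = 1"
      by auto
    have dU: "dim (ssum x y \<inter> x0) = dim (x \<inter> x0) + 1" using r rank[OF Seq Aeq] by simp
    have e: "ssum (ssum x y) x0 = ssum x x0" by (rule ssum_ssum[OF sx sy Seq])
    have dy: "dim y = dim x" using gx gy Seq Aeq by simp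
    have dxy: "dim (ssum x y) = dim x + 1" using gU gx e dU by simp
    have dw: "dim w + 1 = dim x" using gxy dxy dy by simp
    have "w \<inter> x0 = x \<inter> x0" using Aeq unfolding w_def by blast
    then have "dim (ssum w x0) + 1 = dim (ssum x x0)" using gw gx dw by simp
    then have "ssum w x0 \<noteq> ssum x x0" by auto
    then show "P1 x y \<and> ssum (x \<inter> y) x0 \<noteq> ssum x x0"
      unfolding P1_def using dy dw Seq unfolding w_def by simp
  qed
qed

lemma ssum_self: "subspace x \<Longrightarrow> ssum x x = x"
  by (rule antisym[OF ssum_least[OF order_refl order_refl] ssum_ge1])

lemma qq_eq: "qq sc = sqrt (real Q)" by (simp add: qq_def Q_def)
lemma qq_pos: "qq sc > 0" using Q_ge2 by (simp add: qq_eq)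
lemma qq2: "(qq sc)\<^sup>2 = real Q" by (simp add: qq_eq)

lemma entry:
  assumes y: "y \<in> subspaces sc" and x: "x \<in> subspaces sc"
  shows "complex_of_real ((qq sc)\<^sup>2 - 1) *
       (ocomp sc (opL2 sc x0) (opR2 sc x0) y x - ocomp sc (opR2 sc x0) (opL2 sc x0) y x)
   = complex_of_real ((qq sc)\<^sup>2 - 1) * opD3 sc x0 x1 y x + opD4 sc x0 y x
     - complex_of_real (qq sc ^ Dim sc) *
         ocomp sc (oinv sc (opD1 sc x0)) (oinv sc (opD2 sc x0)) y x"
proof -
  have sx: "subspace x" and sy: "subspace y" using x y by (simp_all add: mem_subspaces)
  define T1 where "T1 = {z\<in>subspaces sc. (covby sc y z \<and> ssum y x0 = ssum z x0) \<and> (covby sc x z \<and> ssum z x0 = ssum x x0)}"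
  define T2 where "T2 = {z\<in>subspaces sc. (covby sc z y \<and> ssum y x0 = ssum z x0) \<and> (covby sc z x \<and> ssum z x0 = ssum x x0)}"
  have LR: "ocomp sc (opL2 sc x0) (opR2 sc x0) y x = of_nat (card T1)"
    unfolding ocomp_def opL2_def opR2_def T1_def by (rule card_prod_if[OF fin_sets])
  have RL: "ocomp sc (opR2 sc x0) (opL2 sc x0) y x = of_nat (card T2)"
    unfolding ocomp_def opL2_def opR2_def T2_def by (rule card_prod_if[OF fin_sets])
  define m1 where "m1 = (\<lambda>x. complex_of_real (qq sc powr real_of_int
        ((int (Dim sc) - int (dim x0)) - 2 * (int (dim (ssum x x0)) - int (dim x0)))))"
  define m2 where "m2 = (\<lambda>x. complex_of_real (qq sc powr real_of_int (int (dim x0) - 2 * int (dim (x \<inter> x0)))))"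
  have D1: "opD1 sc x0 = (\<lambda>y x. if y = x \<and> x \<in> subspaces sc then m1 x else 0)"
    unfolding opD1_def m1_def by simp
  have D2: "opD2 sc x0 = (\<lambda>y x. if y = x \<and> x \<in> subspaces sc then m2 x else 0)"
    unfolding opD2_def m2_def by simp
  have nz1: "\<forall>x\<in>subspaces sc. m1 x \<noteq> 0" unfolding m1_def using qq_pos by simp
  have nz2: "\<forall>x\<in>subspaces sc. m2 x \<noteq> 0" unfolding m2_def using qq_pos by simp
  have G: "ocomp sc (oinv sc (opD1 sc x0)) (oinv sc (opD2 sc x0)) y x
      = (if y = x then 1 / m1 x * (1 / m2 x) else 0)"
    unfolding D1 D2 oinv_diag[OF nz1] oinv_diag[OF nz2] ocomp_diag_right[OF x] using x by simp
  show ?thesis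
  proof (cases "y = x")
    case False
    have c1: "card T1 = (if P1 x y then 1 else 0)" unfolding T1_def up_off[OF sx sy False] by simp
    have c2: "card T2 = (if P1 x y \<and> ssum (x \<inter> y) x0 = ssum x x0 then 1 else 0)"
      unfolding T2_def down_off[OF sx sy False] by simp
    have D3: "opD3 sc x0 x1 y x = (if P1 x y \<and> ssum (x \<inter> y) x0 \<noteq> ssum x x0 then 1 else 0)"
      unfolding opD3_def using off_equiv[OF sx sy] x y by simp
    have D4: "opD4 sc x0 y x = 0" unfolding opD4_def using False by simp
    show ?thesis unfolding LR RL G D3 D4 c1 c2 using False
      by (cases "P1 x y"; cases "ssum (x \<inter> y) x0 = ssum x x0") simp_all
  next
    case True
    then have yx: "y = x" .
    define k where "k = dim x"
    define a where "a = dim (x \<inter> x0)"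
    define d0 where "d0 = dim x0"
    define s where "s = dim (ssum x x0)"
    have gx: "s + a = k + d0" unfolding s_def a_def k_def d0_def by (rule grass[OF sx sx0])
    have ak: "a \<le> k" unfolding a_def k_def by (rule dim_mono') blast
    have ad: "a \<le> d0" unfolding a_def d0_def by (rule dim_mono') blast
    have up: "(real Q - 1) * real (card T1) = real Q ^ (d0 - a) - 1"
    proof -
      have "T1 = {z. subspace z \<and> x \<subseteq> z \<and> z \<subseteq> ssum x x0 \<and> dim z = dim x + 1}"
        unfolding T1_def yx by (rule up_set[OF sx])
      moreover have "s - k = d0 - a" using gx by linarith
      ultimately show ?thesis using up_count[OF sx ssum_sub[OF sx sx0] ssum_ge1[OF sx0]]
        unfolding s_def k_def by simp
    qed
    have T2eq: "T2 = Hc x - {z\<in>Hc x. x \<inter> x0 \<subseteq> z}" unfolding T2_def yx by (rule down_set[OF sx])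
    have hsub: "{z\<in>Hc x. x \<inter> x0 \<subseteq> z} \<subseteq> Hc x" by blast
    have cT2: "real (card T2) = real (card (Hc x)) - real (card {z\<in>Hc x. x \<inter> x0 \<subseteq> z})"
      unfolding T2eq using card_Diff_subset[OF fin_sets hsub] card_mono[OF fin_sets hsub] by simp
    have h: "(real Q - 1) * real (card (Hc x)) = real Q ^ k - 1" unfolding k_def by (rule hyp_count[OF sx])
    have ha: "(real Q - 1) * real (card {z\<in>Hc x. x \<inter> x0 \<subseteq> z}) = real Q ^ (k - a) - 1"
      unfolding k_def a_def by (rule hypA_count[OF sub_Int[OF sx sx0] sx]) blast
    have D3: "opD3 sc x0 x1 y x = 0"
    proof -
      have "\<not> P1 x x" unfolding P1_def by simp
      then have "\<not> tau_rank sc x0 x1 x x = 1" using off_equiv[OF sx sx] by simp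
      then show ?thesis unfolding opD3_def yx by simp
    qed
    have D4: "opD4 sc x0 y x = complex_of_real (real Q ^ (k - a) + real Q ^ (d0 - a) - 1)"
    proof -
      have "card x = Q ^ k" "card x0 = Q ^ d0" "card (x \<inter> x0) = Q ^ a"
        unfolding k_def d0_def a_def using card_subspace sx sx0 sub_Int[OF sx sx0] by auto
      moreover have "(of_nat Q :: complex) ^ k = of_nat Q ^ (k - a) * of_nat Q ^ a" using ak
        by (simp add: power_add[symmetric])
      moreover have "(of_nat Q :: complex) ^ d0 = of_nat Q ^ (d0 - a) * of_nat Q ^ a" using ad
        by (simp add: power_add[symmetric])
      moreover have "(of_nat Q :: complex) ^ a \<noteq> 0" using Q_ge2 by simp
      ultimately have "(of_nat (card x) + of_nat (card x0)) / of_nat (card (x \<inter> x0)) - (1::complex)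
          = complex_of_real (real Q ^ (k - a) + real Q ^ (d0 - a) - 1)"
        by (simp add: field_simps)
      then show ?thesis unfolding opD4_def yx using x by simp
    qed
    have pw: "qq sc ^ Dim sc = real Q ^ k * (qq sc powr real_of_int
        ((int (Dim sc) - int (dim x0)) - 2 * (int (dim (ssum x x0)) - int (dim x0)))
        * qq sc powr real_of_int (int (dim x0) - 2 * int (dim (x \<inter> x0))))"
    proof -
      let ?t = "qq sc"
      let ?e1 = "(int (Dim sc) - int (dim x0)) - 2 * (int (dim (ssum x x0)) - int (dim x0))"
      let ?e2 = "int (dim x0) - 2 * int (dim (x \<inter> x0))"
      have ie: "real (Dim sc) = real (2 * k) + real_of_int ?e1 + real_of_int ?e2"
      proof -
        have "int (Dim sc) = int (2 * k) + ?e1 + ?e2" using gx unfolding s_def a_def k_def d0_def by simp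
        then show ?thesis by (metis of_int_add of_int_of_nat_eq)
      qed
      have "?t ^ Dim sc = ?t powr real (Dim sc)" using qq_pos by (simp add: powr_realpow)
      also have "\<dots> = ?t powr real (2 * k) * ?t powr real_of_int ?e1 * ?t powr real_of_int ?e2"
        unfolding ie by (simp only: powr_add)
      also have "?t powr real (2 * k) = real Q ^ k"
      proof -
        have "?t powr real (2 * k) = ?t ^ (2 * k)" by (rule powr_realpow[OF qq_pos])
        also have "\<dots> = (?t ^ 2) ^ k" by (simp only: power_mult)
        also have "\<dots> = real Q ^ k" by (simp only: qq2)
        finally show ?thesis .
      qed
      finally show ?thesis by (simp add: mult.assoc)
    qed
    have key: "(real Q - 1) * (real (card T1) - real (card T2))
        = real Q ^ (k - a) + real Q ^ (d0 - a) - 1 - real Q ^ k"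
    proof -
      have "(real Q - 1) * (real (card T1) - real (card T2))
          = (real Q - 1) * real (card T1) - (real Q - 1) * real (card (Hc x))
            + (real Q - 1) * real (card {z\<in>Hc x. x \<inter> x0 \<subseteq> z})"
        unfolding cT2 by (simp add: algebra_simps)
      then show ?thesis unfolding up h ha by simp
    qed
    let ?r1 = "qq sc powr real_of_int ((int (Dim sc) - int (dim x0)) - 2 * (int (dim (ssum x x0)) - int (dim x0)))"
    let ?r2 = "qq sc powr real_of_int (int (dim x0) - 2 * int (dim (x \<inter> x0)))"
    have r1: "?r1 > 0" and r2: "?r2 > 0" using qq_pos by simp_all
    have gen: "\<And>A B C::real. B \<noteq> 0 \<Longrightarrow> C \<noteq> 0 \<Longrightarrow> A * (B * C) * (1 / B * (1 / C)) = A"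
      by simp
    have "qq sc ^ Dim sc * (1 / ?r1 * (1 / ?r2)) = real Q ^ k"
      unfolding pw using r1 r2 by (intro gen) simp_all
    moreover have "complex_of_real (qq sc ^ Dim sc) * (1 / m1 x * (1 / m2 x))
        = complex_of_real (qq sc ^ Dim sc * (1 / ?r1 * (1 / ?r2)))"
      unfolding m1_def m2_def by simp
    ultimately have G2: "complex_of_real (qq sc ^ Dim sc) * (1 / m1 x * (1 / m2 x)) = complex_of_real (real Q ^ k)"
      by simp
    have L: "complex_of_real (real Q - 1) * (of_nat (card T1) - of_nat (card T2))
        = complex_of_real ((real Q - 1) * (real (card T1) - real (card T2)))" by simp
    have R: "complex_of_real (real Q - 1) * 0 + complex_of_real (real Q ^ (k - a) + real Q ^ (d0 - a) - 1)
        - complex_of_real (real Q ^ k)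
        = complex_of_real (real Q ^ (k - a) + real Q ^ (d0 - a) - 1 - real Q ^ k)" by simp
    have I: "(if y = x then 1 / m1 x * (1 / m2 x) else 0) = 1 / m1 x * (1 / m2 x)" using yx by simp
    show ?thesis
      unfolding LR RL G D3 D4 qq2 I G2 L R key ..
  qed
qed

end

theorem mainTheorem16:
  fixes sc :: "'f::{field,finite} \<Rightarrow> 'v::ab_group_add \<Rightarrow> 'v"
    and x0 x1 :: "'v set"
  assumes "vector_space sc"
    and "finite (UNIV :: 'v set)"
    and "x0 \<in> subspaces sc" and "x1 \<in> subspaces sc"
    and "ssum x0 x1 = UNIV" and "x0 \<inter> x1 = {0}"
  shows "\<forall>y\<in>subspaces sc. \<forall>x\<in>subspaces sc.
     complex_of_real ((qq sc)\<^sup>2 - 1) *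
       (ocomp sc (opL2 sc x0) (opR2 sc x0) y x - ocomp sc (opR2 sc x0) (opL2 sc x0) y x)
   = complex_of_real ((qq sc)\<^sup>2 - 1) * opD3 sc x0 x1 y x + opD4 sc x0 y x
     - complex_of_real (qq sc ^ Dim sc) *
         ocomp sc (oinv sc (opD1 sc x0)) (oinv sc (opD2 sc x0)) y x"
proof -
  have "setting sc x0 x1"
    unfolding setting_def setting_axioms_def fvs_def fvs_axioms_def
    using assms by (simp add: subspaces_def)
  then interpret setting sc x0 x1 .
  show ?thesis by (intro ballI) (rule entry)
qed

end
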